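(* Assume the standing hypotheses (S) with $\lambda\ge0$, that $\nabla\phi^{\#}_{\rho_0}$ is $L$-Lipschitz on $\mathbb H$, and $\tau\le1/L$. Then for every $n\ge0$: (1) the energy is non-increasing: \[\phi^{\#}_{\rho_0}(X_{n+1}^\tau)+\frac\lambda2\|X_n^\tau-X_{n+1}^\tau\|^2_{\mathbb H}+\tau\Big(1-\frac{L\tau}2\Big)\|\nabla\phi^{\#}_{\rho_0}(X_{n+1}^\tau)\|^2_{\mathbb H}\le\phi^{\#}_{\rho_0}(X_n^\tau);\] (2) the gradient norm decays exponentially: \[\|\nabla\phi^{\#}_{\rho_0}(X_n^\tau)\|^2_{\mathbb H}\ge e^{2\lambda_{\tau,L}\tau}\|\nabla\phi^{\#}_{\rho_0}(X_{n+1}^\tau)\|^2_{\mathbb H},\qquad\lambda_{\tau,L}:=\frac{\log\big(1+\lambda\tau(2-L\tau)\big)}{2\tau}\ge0.\]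
   Context: Standing hypotheses (S): $\rho_0\in\mathcal P_2(\mathbb R^d)$; $\mathbb H=L^2(\mathbb R^d;\rho_0)$ is the Hilbert space of $\rho_0$-square-integrable maps $\mathbb R^d\to\mathbb R^d$ with $\langle\xi_1,\xi_2\rangle_{\mathbb H}=\int\langle\xi_1,\xi_2\rangle d\rho_0$; $\phi:\mathcal P_2(\mathbb R^d)\to\mathbb R$ has lift $\phi^{\#}_{\rho_0}(\xi):=\phi(\xi_{\#}\rho_0)$ which is Fréchet differentiable on $\mathbb H$ (gradient $\nabla\phi^{\#}_{\rho_0}$), $\lambda$-convex on $\mathbb H$ for some $\lambda\in\mathbb R$ (i.e. $\phi^{\#}_{\rho_0}((1-t)\xi_1+t\xi_2)\le(1-t)\phi^{\#}_{\rho_0}(\xi_1)+t\phi^{\#}_{\rho_0}(\xi_2)-\frac\lambda2t(1-t)\|\xi_1-\xi_2\|_{\mathbb H}^2$), and $\inf_{\mathbb H}\phi^{\#}_{\rho_0}>-\infty$; the time step $\tau>0$ satisfies $\lambda/2+1/\tau>0$; $X_0^\tau\in\mathbb H$. Lagrangian trapezoidal scheme: $X_{n+1}^\tau$ is the (unique) minimizer over $\xi\in\mathbb H$ of $\tfrac12\phi^{\#}_{\rho_0}(\xi)+\tfrac12\langle\nabla\phi^{\#}_{\rho_0}(X_n^\tau),\xi\rangle_{\mathbb H}+\tfrac1{2\tau}\|\xi-X_n^\tau\|^2_{\mathbb H}$; equivalently $X_{n+1}^\tau=X_n^\tau-\frac\tau2\big(\nabla\phi^{\#}_{\rho_0}(X_{n+1}^\tau)+\nabla\phi^{\#}_{\rho_0}(X_n^\tau)\big)$.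 *)

theory Defs
  imports "HOL-Analysis.Analysis"
begin

text \<open>The Hilbert space H = L^2(R^d; rho0) is modelled by an abstract real Hilbert space
  type 'h; F plays the role of the lift phi#_rho0 and G the role of its gradient.\<close>

definition lambda_convex_on_space :: "real \<Rightarrow> ('h::real_inner \<Rightarrow> real) \<Rightarrow> bool" where
  "lambda_convex_on_space lam F \<longleftrightarrow>
     (\<forall>x y t. 0 \<le> t \<and> t \<le> 1 \<longrightarrow>
        F ((1 - t) *\<^sub>R x + t *\<^sub>R y)
          \<le> (1 - t) * F x + t * F y - lam / 2 * t * (1 - t) * (norm (x - y))\<^sup>2)"

definition trapezoid_objective ::
    "('h::real_inner \<Rightarrow> real) \<Rightarrow> ('h \<Rightarrow> 'h) \<Rightarrow> real \<Rightarrow> 'h \<Rightarrow> 'h \<Rightarrow> real" where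
  "trapezoid_objective F G tau Xn xi =
     1/2 * F xi + 1/2 * (G Xn \<bullet> xi) + 1 / (2 * tau) * (norm (xi - Xn))\<^sup>2"

definition lambda_tauL :: "real \<Rightarrow> real \<Rightarrow> real \<Rightarrow> real" where
  "lambda_tauL lam tau L = ln (1 + lam * tau * (2 - L * tau)) / (2 * tau)"

end

theory Submission
  imports Defs
begin


lemma grad_ineq:
  fixes F :: "'h::real_inner \<Rightarrow> real" and G :: "'h \<Rightarrow> 'h"
  assumes grad: "\<And>x. (F has_derivative (\<lambda>h. G x \<bullet> h)) (at x)"
    and convex: "lambda_convex_on_space lam F"
  shows "F x + G x \<bullet> (y - x) + lam/2 * (norm (y - x))\<^sup>2 \<le> F y"
proof -
  define \<phi> where "\<phi> = (\<lambda>t::real. F (x + t *\<^sub>R (y - x)))"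
  have l: "((\<lambda>t::real. x + t *\<^sub>R (y-x)) has_derivative (\<lambda>t. t *\<^sub>R (y-x))) (at 0)"
    by (auto intro!: derivative_eq_intros)
  have "((F \<circ> (\<lambda>t::real. x + t *\<^sub>R (y-x))) has_derivative ((\<lambda>h. G (x + 0 *\<^sub>R (y-x)) \<bullet> h) \<circ> (\<lambda>t. t *\<^sub>R (y-x)))) (at 0)"
    by (rule diff_chain_at[OF l]) (use grad in auto)
  moreover have "((\<lambda>h. G (x + 0 *\<^sub>R (y-x)) \<bullet> h) \<circ> (\<lambda>t. t *\<^sub>R (y-x))) = (*) (G x \<bullet> (y - x))"
    by (auto simp: fun_eq_iff)
  ultimately have "(\<phi> has_real_derivative (G x \<bullet> (y-x))) (at 0)"
    by (simp add: has_field_derivative_def \<phi>_def o_def)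
  then have "(\<phi> has_real_derivative (G x \<bullet> (y-x))) (at 0 within {0<..})"
    by (rule has_field_derivative_at_within)
  then have lim: "((\<lambda>t. (\<phi> t - \<phi> 0) / (t - 0)) \<longlongrightarrow> G x \<bullet> (y-x)) (at_right 0)"
    by (simp add: has_field_derivative_iff)
  have lim2: "((\<lambda>t. F y - F x - lam/2 * (1 - t) * (norm (y - x))\<^sup>2) \<longlongrightarrow> F y - F x - lam/2 * (1 - 0) * (norm (y - x))\<^sup>2) (at_right 0)"
    by (intro tendsto_intros)
  have ev: "\<forall>\<^sub>F t in at_right 0. (\<phi> t - \<phi> 0) / (t - 0) \<le> F y - F x - lam/2 * (1 - t) * (norm (y - x))\<^sup>2"
  proof -
    have "\<forall>\<^sub>F t in at_right (0::real). t < 1" using eventually_at_right[of "0::real" 1] by (auto intro!: exI[of _ 1])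
    moreover have "\<forall>\<^sub>F t in at_right (0::real). t > 0" by (simp add: eventually_at_right_less)
    ultimately show ?thesis
    proof eventually_elim
      case (elim t)
      have e: "(1 - t) *\<^sub>R x + t *\<^sub>R y = x + t *\<^sub>R (y - x)" by (simp add: algebra_simps)
      have "F ((1 - t) *\<^sub>R x + t *\<^sub>R y) \<le> (1 - t) * F x + t * F y - lam / 2 * t * (1 - t) * (norm (x - y))\<^sup>2"
        using convex elim unfolding lambda_convex_on_space_def by auto
      then have "\<phi> t - \<phi> 0 \<le> t * (F y - F x - lam/2 * (1 - t) * (norm (y - x))\<^sup>2)"
        unfolding \<phi>_def e by (simp add: norm_minus_commute algebra_simps)
      then show ?case using elim by (simp add: divide_simps mult.commute)
    qed
  qed
  have "G x \<bullet> (y-x) \<le> F y - F x - lam/2 * (1 - 0) * (norm (y - x))\<^sup>2"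
    by (rule tendsto_le[OF _ lim2 lim ev]) simp
  then show ?thesis by simp
qed

lemma euler:
  fixes F :: "'h::real_inner \<Rightarrow> real" and G :: "'h \<Rightarrow> 'h"
  assumes grad: "\<And>x. (F has_derivative (\<lambda>h. G x \<bullet> h)) (at x)"
    and tau: "tau > 0"
    and minb: "\<And>xi. trapezoid_objective F G tau a b \<le> trapezoid_objective F G tau a xi"
  shows "a - b = (tau/2) *\<^sub>R (G a + G b)"
proof -
  define J where "J = (\<lambda>xi. 1/2 * F xi + 1/2 * (G a \<bullet> xi) + 1 / (2 * tau) * ((xi - a) \<bullet> (xi - a)))"
  have Jeq: "J = trapezoid_objective F G tau a"
    by (simp add: J_def fun_eq_iff trapezoid_objective_def power2_norm_eq_inner)
  have D: "(J has_derivative (\<lambda>h. 1/2 * (G b \<bullet> h) + 1/2 * (G a \<bullet> h) + 1 / (2 * tau) * (h \<bullet> (b - a) + (b - a) \<bullet> h))) (at b)"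
    unfolding J_def by (intro derivative_eq_intros grad) (auto intro: grad)
  have z: "(\<lambda>h. 1/2 * (G b \<bullet> h) + 1/2 * (G a \<bullet> h) + 1 / (2 * tau) * (h \<bullet> (b - a) + (b - a) \<bullet> h)) = (\<lambda>v. 0)"
    using differential_zero_maxmin[OF UNIV_I open_UNIV D] minb Jeq by auto
  define w where "w = (1/2) *\<^sub>R G b + (1/2) *\<^sub>R G a + (1/tau) *\<^sub>R (b - a)"
  have "1/2 * (G b \<bullet> w) + 1/2 * (G a \<bullet> w) + 1 / (2 * tau) * (w \<bullet> (b - a) + (b - a) \<bullet> w) = 0"
    using fun_cong[OF z, of w] by simp
  then have "w \<bullet> w = 0" unfolding w_def
    by (simp add: inner_add_left inner_add_right inner_commute algebra_simps)
  then have "w = 0" by simp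
  then have "(tau) *\<^sub>R w = 0" by simp
  then have "(tau/2) *\<^sub>R G b + (tau/2) *\<^sub>R G a + (b - a) = 0"
    unfolding w_def using tau by (simp add: scaleR_add_right)
  then show ?thesis by (simp add: algebra_simps scaleR_add_right)
qed


lemma keyP:
  fixes A B P c :: real
  assumes h1: "A - B \<ge> 0" and h2: "A - 2*P + B \<le> c^2 * (A + 2*P + B)"
    and c0: "0 \<le> c" and c1: "c \<le> 1/2" and B0: "B \<ge> 0"
  shows "P \<ge> (1 - c) * B"
proof -
  have q: "(1 - c^2) * (A - 2*P + B) \<le> 4 * c^2 * P" using h2 by (simp add: algebra_simps)
  have c2: "1 - c^2 \<ge> 0" proof -
    have "c * c \<le> 1 * 1" using c0 c1 by (intro mult_mono) auto
    then show ?thesis by (simp add: power2_eq_square)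
  qed
  have "(1 - c^2) * (2*B - 2*P) \<le> (1 - c^2) * (A - 2*P + B)"
    by (rule mult_left_mono) (use h1 c2 in auto)
  with q have r: "(1 - c^2) * B \<le> (1 + c^2) * P" by (simp add: algebra_simps)
  have "(1 - c) * (1 + c^2) \<le> 1 - c^2"
  proof -
    have "(1 - c^2) - (1 - c) * (1 + c^2) = c * (1 - c)^2" by (simp add: algebra_simps power2_eq_square)
    moreover have "c * (1 - c)^2 \<ge> 0" using c0 by simp
    ultimately show ?thesis by linarith
  qed
  then have "(1 - c) * (1 + c^2) * B \<le> (1 - c^2) * B" by (rule mult_right_mono) (use B0 in auto)
  with r have "((1 - c) * B) * (1 + c^2) \<le> P * (1 + c^2)" by (simp add: algebra_simps)
  moreover have "1 + c^2 > 0" by (simp add: add_pos_nonneg)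
  ultimately show ?thesis by simp
qed


theorem mainTheorem17:
  fixes F :: "'h::{real_inner, complete_space} \<Rightarrow> real"
    and G :: "'h \<Rightarrow> 'h"
    and X :: "nat \<Rightarrow> 'h"
    and lam L tau :: real
  assumes grad: "\<And>x. (F has_derivative (\<lambda>h. G x \<bullet> h)) (at x)"
    and convex: "lambda_convex_on_space lam F"
    and bdd: "bdd_below (range F)"
    and tau_pos: "tau > 0"
    and step_cond: "lam / 2 + 1 / tau > 0"
    and scheme: "\<And>n xi. trapezoid_objective F G tau (X n) (X (Suc n))
                          \<le> trapezoid_objective F G tau (X n) xi"
    and lam_nonneg: "lam \<ge> 0"
    and L_nonneg: "L \<ge> 0"
    and lipschitz: "\<And>x y. norm (G x - G y) \<le> L * norm (x - y)"
    and tau_small: "tau * L \<le> 1"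
  shows "\<forall>n. F (X (Suc n)) + lam / 2 * (norm (X n - X (Suc n)))\<^sup>2
               + tau * (1 - L * tau / 2) * (norm (G (X (Suc n))))\<^sup>2 \<le> F (X n)
          \<and> (norm (G (X n)))\<^sup>2 \<ge> exp (2 * lambda_tauL lam tau L * tau) * (norm (G (X (Suc n))))\<^sup>2
          \<and> lambda_tauL lam tau L \<ge> 0"
  proof (intro allI)
  fix n
  define a where "a = X n"
  define b where "b = X (Suc n)"
  define c where "c = L * tau / 2"
  define k where "k = lam * tau / 2"
  define A where "A = G a \<bullet> G a"
  define B where "B = G b \<bullet> G b"
  define P where "P = G a \<bullet> G b"
  define S where "S = A + 2 * P + B"
  have e: "a - b = (tau/2) *\<^sub>R (G a + G b)"
    unfolding a_def b_def by (rule euler[OF grad tau_pos scheme])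
  have nab: "(norm (a - b))\<^sup>2 = tau^2/4 * S"
    unfolding e S_def A_def B_def P_def power2_norm_eq_inner
    by (simp add: inner_add_left inner_add_right inner_commute algebra_simps power2_eq_square)
  have nba: "(norm (b - a))\<^sup>2 = tau^2/4 * S" using nab by (simp add: norm_minus_commute)
  have S0: "S \<ge> 0"
  proof -
    have "tau^2/4 * S \<ge> 0" using nab by (metis zero_le_power2)
    moreover have "tau^2/4 > 0" using tau_pos by simp
    ultimately show ?thesis by (simp add: zero_le_mult_iff)
  qed
  have gi1: "F b + G b \<bullet> (a - b) + lam/2 * (norm (a - b))\<^sup>2 \<le> F a"
    by (rule grad_ineq[OF grad convex])
  have gi2: "F a + G a \<bullet> (b - a) + lam/2 * (norm (b - a))\<^sup>2 \<le> F b"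
    by (rule grad_ineq[OF grad convex])
  have i1: "G b \<bullet> (a - b) = tau/2 * (P + B)"
    unfolding e P_def B_def by (simp add: inner_add_right inner_commute algebra_simps)
  have i2: "G a \<bullet> (b - a) = - tau/2 * (A + P)"
  proof -
    have h: "b - a = (- (tau/2)) *\<^sub>R (G a + G b)" using e by (metis minus_diff_eq scaleR_minus_left)
    show ?thesis unfolding h A_def P_def by (simp add: inner_add_right inner_commute algebra_simps)
  qed
  have mono: "tau/2 * (A - B) \<ge> lam * (tau^2/4 * S)"
  proof -
    have x: "tau/2 * (P + B) + (- tau/2 * (A + P)) = - (tau/2 * (A - B))" by (simp add: field_simps)
    have y: "lam/2 * (tau^2/4 * S) + lam/2 * (tau^2/4 * S) = lam * (tau^2/4 * S)" by simp
    have "F b + tau/2 * (P + B) + lam/2 * (tau^2/4 * S) \<le> F a" using gi1 unfolding i1 nab .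
    moreover have "F a + (- tau/2 * (A + P)) + lam/2 * (tau^2/4 * S) \<le> F b" using gi2 unfolding i2 nba .
    ultimately show ?thesis using x y by linarith
  qed
  have mono2: "A - B \<ge> k * S"
  proof -
    have "tau/2 * (A - B) \<ge> tau/2 * (k * S)" using mono unfolding k_def by (simp add: power2_eq_square algebra_simps)
    then show ?thesis using tau_pos by simp
  qed
  have kS: "k * S \<ge> 0" unfolding k_def using lam_nonneg tau_pos S0 by simp
  have lip: "(norm (G a - G b))\<^sup>2 \<le> (L * norm (a - b))\<^sup>2"
    using lipschitz[of a b] by (simp add: power_mono)
  have lip2: "A - 2*P + B \<le> c^2 * (A + 2*P + B)"
  proof -
    have "(norm (G a - G b))\<^sup>2 = A - 2*P + B" unfolding A_def B_def P_def power2_norm_eq_inner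
      by (simp add: inner_diff_left inner_diff_right inner_commute)
    moreover have "(L * norm (a - b))\<^sup>2 = c^2 * S" unfolding c_def power_mult_distrib nab
      by (simp add: power2_eq_square)
    ultimately show ?thesis using lip S_def by simp
  qed
  have c0: "c \<ge> 0" unfolding c_def using L_nonneg tau_pos by simp
  have c1: "c \<le> 1/2" unfolding c_def using tau_small by (simp add: mult.commute)
  have B0: "B \<ge> 0" unfolding B_def by simp
  have kP: "P \<ge> (1 - c) * B" by (rule keyP) (use mono2 kS lip2 c0 c1 B0 in auto)
  have part1: "F b + lam / 2 * (norm (a - b))\<^sup>2 + tau * (1 - L * tau / 2) * (norm (G b))\<^sup>2 \<le> F a"
  proof -
    have "tau * (1 - L * tau / 2) * (norm (G b))\<^sup>2 = tau * (1 - c) * B"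
      unfolding c_def B_def power2_norm_eq_inner by simp
    also have "\<dots> \<le> tau/2 * (P + B)"
    proof -
      have cB: "c * B \<ge> 0" using c0 B0 by simp
      have "(1 - c) * B * 2 = (1 - c) * B + B - c * B" by (simp add: algebra_simps)
      then have "(1 - c) * B * 2 \<le> P + B" using kP cB by linarith
      then have "tau * ((1 - c) * B * 2) \<le> tau * (P + B)" using tau_pos by (simp add: mult_left_mono)
      then show ?thesis by (simp add: field_simps)
    qed
    finally show ?thesis using gi1 i1 by linarith
  qed
  define q where "q = 1 + lam * tau * (2 - L * tau)"
  have q1: "q \<ge> 1" unfolding q_def using lam_nonneg tau_pos tau_small by (simp add: mult.commute)
  have ex: "exp (2 * lambda_tauL lam tau L * tau) = q"
    unfolding lambda_tauL_def q_def[symmetric] using tau_pos q1 by simp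
  have part3: "lambda_tauL lam tau L \<ge> 0"
    unfolding lambda_tauL_def q_def[symmetric] using tau_pos q1 by simp
  have S4: "S \<ge> 4 * (1 - c) * B"
  proof -
    have cB: "c * B \<ge> 0" using c0 B0 by simp
    have "4 * (1 - c) * B = 4 * B - 4 * (c * B)" "(1 - c) * B = B - c * B" by (simp_all add: algebra_simps)
    then show ?thesis unfolding S_def using kP mono2 kS cB by linarith
  qed
  have part2: "A \<ge> q * B"
  proof -
    have "q = 1 + k * (4 * (1 - c))" unfolding q_def k_def c_def by (simp add: algebra_simps)
    then have "q * B = B + k * (4 * (1 - c) * B)" by (simp only:) (simp add: algebra_simps)
    also have "\<dots> \<le> B + k * S" using S4 lam_nonneg tau_pos unfolding k_def by (simp add: mult_left_mono)
    also have "\<dots> \<le> A" using mono2 by linarith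
    finally show ?thesis .
  qed
  show "F (X (Suc n)) + lam / 2 * (norm (X n - X (Suc n)))\<^sup>2
               + tau * (1 - L * tau / 2) * (norm (G (X (Suc n))))\<^sup>2 \<le> F (X n)
          \<and> (norm (G (X n)))\<^sup>2 \<ge> exp (2 * lambda_tauL lam tau L * tau) * (norm (G (X (Suc n))))\<^sup>2
          \<and> lambda_tauL lam tau L \<ge> 0"
    using part1 part2 part3 ex unfolding a_def[symmetric] b_def[symmetric] A_def B_def power2_norm_eq_inner
    by simp
qed

end
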